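(* Let $H$ be a discrete group which admits a Sylow $p$-subgroup $S\le H$. Then there is an exact sequence \[1\to Z(H)\to N_H(S)\to\mathrm{Aut}(H,S)\to\mathrm{Out}(H)\to1,\] where $N_H(S)\to\mathrm{Aut}(H,S)$ sends $h$ to conjugation $c_h$ and $\mathrm{Aut}(H,S)\to\mathrm{Out}(H)$ is the restriction of the projection $\mathrm{Aut}(H)\to\mathrm{Out}(H)$.
   Context: A discrete $p$-toral group is a group containing a normal subgroup isomorphic to $(\mathbb{Z}/p^\infty)^r$ of finite $p$-power index. For a discrete group $H$, a discrete $p$-toral subgroup $S\le H$ is a Sylow $p$-subgroup of $H$ if every discrete $p$-toral subgroup of $H$ is $H$-conjugate to a subgroup of $S$. $\mathrm{Aut}(H,S)$ denotes the group of automorphisms of $H$ mapping $S$ onto $S$. *)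

theory Defs
  imports "HOL-Algebra.Algebra" "HOL-Algebra.Group_Action" "HOL-Complex_Analysis.Complex_Analysis"
begin

text \<open>The Pruefer p-group Z/p^infinity, realised as the multiplicative group of complex
  roots of unity of p-power order.\<close>
definition prufer :: "nat \<Rightarrow> complex monoid" where
  "prufer p = \<lparr>carrier = {z. \<exists>n::nat. z ^ (p ^ n) = 1}, monoid.mult = (*), one = 1\<rparr>"

definition discrete_p_toral :: "nat \<Rightarrow> ('a, 'b) monoid_scheme \<Rightarrow> bool" where
  "discrete_p_toral p P \<longleftrightarrow> group P \<and>
     (\<exists>N (r::nat) (k::nat). N \<lhd> P \<and>
        (P\<lparr>carrier := N\<rparr>) \<cong> product_group {..<r} (\<lambda>_. prufer p) \<and>
        finite (rcosets\<^bsub>P\<^esub> N) \<and> card (rcosets\<^bsub>P\<^esub> N) = p ^ k)"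

definition conj_set :: "('a, 'b) monoid_scheme \<Rightarrow> 'a \<Rightarrow> 'a set \<Rightarrow> 'a set" where
  "conj_set H h P = (\<lambda>x. h \<otimes>\<^bsub>H\<^esub> x \<otimes>\<^bsub>H\<^esub> inv\<^bsub>H\<^esub> h) ` P"

definition sylow_p :: "nat \<Rightarrow> ('a, 'b) monoid_scheme \<Rightarrow> 'a set \<Rightarrow> bool" where
  "sylow_p p H S \<longleftrightarrow> subgroup S H \<and> discrete_p_toral p (H\<lparr>carrier := S\<rparr>) \<and>
     (\<forall>P. subgroup P H \<and> discrete_p_toral p (H\<lparr>carrier := P\<rparr>) \<longrightarrow>
        (\<exists>h \<in> carrier H. conj_set H h P \<subseteq> S))"

definition center :: "('a, 'b) monoid_scheme \<Rightarrow> 'a set" where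
  "center H = {z \<in> carrier H. \<forall>x \<in> carrier H. z \<otimes>\<^bsub>H\<^esub> x = x \<otimes>\<^bsub>H\<^esub> z}"

text \<open>Conjugation automorphism c_h (as an extensional function, matching auto H).\<close>
definition conjaut :: "('a, 'b) monoid_scheme \<Rightarrow> 'a \<Rightarrow> ('a \<Rightarrow> 'a)" where
  "conjaut H h = (\<lambda>x \<in> carrier H. h \<otimes>\<^bsub>H\<^esub> x \<otimes>\<^bsub>H\<^esub> inv\<^bsub>H\<^esub> h)"

definition AutHS :: "('a, 'b) monoid_scheme \<Rightarrow> 'a set \<Rightarrow> ('a \<Rightarrow> 'a) set" where
  "AutHS H S = {f \<in> auto H. f ` S = S}"

definition Inn :: "('a, 'b) monoid_scheme \<Rightarrow> ('a \<Rightarrow> 'a) set" where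
  "Inn H = conjaut H ` carrier H"

definition Out :: "('a, 'b) monoid_scheme \<Rightarrow> ('a \<Rightarrow> 'a) set monoid" where
  "Out H = AutoGroup H Mod Inn H"

definition out_proj :: "('a, 'b) monoid_scheme \<Rightarrow> ('a \<Rightarrow> 'a) \<Rightarrow> ('a \<Rightarrow> 'a) set" where
  "out_proj H f = Inn H #>\<^bsub>AutoGroup H\<^esub> f"

end

theory Submission
  imports Defs
begin

lemma root_pow_mono:
  fixes z :: complex
  assumes "z ^ (p ^ n) = 1" "n \<le> m"
  shows "z ^ (p ^ m) = 1"
proof -
  have "p ^ m = p ^ n * p ^ (m - n)" using assms(2) by (simp add: power_add[symmetric])
  then show ?thesis using assms(1) by (simp add: power_mult)
qed

lemma prufer_simps [simp]: "one (prufer p) = 1" "monoid.mult (prufer p) = (*)"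
  "carrier (prufer p) = {z. \<exists>n::nat. z ^ (p ^ n) = 1}"
  by (auto simp: prufer_def)

lemma prufer_group:
  assumes "p > 0"
  shows "group (prufer p)"
proof (rule groupI)
  fix x y assume "x \<in> carrier (prufer p)" "y \<in> carrier (prufer p)"
  then obtain n m where n: "x ^ (p^n) = 1" and m: "y ^ (p^m) = 1" by (auto simp: prufer_def)
  have "x ^ (p^(n+m)) = 1" "y ^ (p^(n+m)) = 1" using root_pow_mono[OF n] root_pow_mono[OF m] by auto
  then have "(x*y) ^ (p^(n+m)) = 1" by (simp add: power_mult_distrib)
  then show "x \<otimes>\<^bsub>prufer p\<^esub> y \<in> carrier (prufer p)" by (auto simp: prufer_def)
next
  show "\<one>\<^bsub>prufer p\<^esub> \<in> carrier (prufer p)" by (auto simp: prufer_def)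
next
  fix x y z show "x \<otimes>\<^bsub>prufer p\<^esub> y \<otimes>\<^bsub>prufer p\<^esub> z = x \<otimes>\<^bsub>prufer p\<^esub> (y \<otimes>\<^bsub>prufer p\<^esub> z)"
    by (simp add: prufer_def mult.assoc)
next
  fix x show "\<one>\<^bsub>prufer p\<^esub> \<otimes>\<^bsub>prufer p\<^esub> x = x" by (simp add: prufer_def)
next
  fix x assume "x \<in> carrier (prufer p)"
  then obtain n where n: "x ^ (p^n) = 1" by (auto simp: prufer_def)
  then have "x \<noteq> 0" using assms by (auto simp: power_0_left)
  moreover have "(inverse x) ^ (p^n) = 1" using n by (simp add: power_inverse)
  ultimately show "\<exists>y\<in>carrier (prufer p). y \<otimes>\<^bsub>prufer p\<^esub> x = \<one>\<^bsub>prufer p\<^esub>"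
    by (intro bexI[of _ "inverse x"]) (auto simp: prufer_def)
qed

lemma prufer_pow: "x [^]\<^bsub>prufer p\<^esub> (n::nat) = x ^ n"
  by (induction n) (auto simp: prufer_def mult.commute)

abbreviation PG :: "nat \<Rightarrow> nat \<Rightarrow> (nat \<Rightarrow> complex) monoid" where
  "PG p r \<equiv> product_group {..<r} (\<lambda>_. prufer p)"

lemma PG_group: "p > 0 \<Longrightarrow> group (PG p r)"
  by (simp add: prufer_group)

lemma PG_pow: "x \<in> carrier (PG p r) \<Longrightarrow> x [^]\<^bsub>PG p r\<^esub> (n::nat) = (\<lambda>i\<in>{..<r}. x i ^ n)"
proof (induction n)
  case 0 then show ?case by simp
next
  case (Suc n) then show ?case by (auto simp: mult.commute fun_eq_iff)
qed

lemma PG_tors: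
  assumes "y \<in> carrier (PG p r)"
  shows "\<exists>m. y [^]\<^bsub>PG p r\<^esub> (p^m) = \<one>\<^bsub>PG p r\<^esub>"
proof -
  have "\<forall>i<r. \<exists>n. y i ^ (p^n) = 1" using assms by (auto simp: PiE_iff)
  then obtain nf where nf: "\<And>i. i < r \<Longrightarrow> y i ^ (p^ nf i) = 1" by metis
  define m where "m = (\<Sum>i<r. nf i)"
  have "nf i \<le> m" if "i < r" for i unfolding m_def
    by (rule member_le_sum) (use that in auto)
  then have "\<And>i. i < r \<Longrightarrow> y i ^ (p^m) = 1" using nf root_pow_mono by blast
  then show ?thesis using assms by (intro exI[of _ m]) (auto simp: PG_pow)
qed

lemma PG_tors_finite:
  assumes "p > 0"
  shows "finite {y \<in> carrier (PG p r). y [^]\<^bsub>PG p r\<^esub> (p^m) = \<one>\<^bsub>PG p r\<^esub>}"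
proof (rule finite_subset)
  show "{y \<in> carrier (PG p r). y [^]\<^bsub>PG p r\<^esub> (p^m) = \<one>\<^bsub>PG p r\<^esub>}
        \<subseteq> PiE {..<r} (\<lambda>_. {z::complex. z ^ (p^m) = 1})"
  proof
    fix y assume y: "y \<in> {y \<in> carrier (PG p r). y [^]\<^bsub>PG p r\<^esub> (p^m) = \<one>\<^bsub>PG p r\<^esub>}"
    then have "(\<lambda>i\<in>{..<r}. y i ^ (p^m)) = (\<lambda>i\<in>{..<r}. 1)"
      using PG_pow[where x=y and p=p and r=r and n="p^m"] by simp
    then have "\<And>i. i < r \<Longrightarrow> y i ^ (p^m) = 1" by (metis lessThan_iff restrict_apply')
    then show "y \<in> PiE {..<r} (\<lambda>_. {z::complex. z ^ (p^m) = 1})" using y by (auto simp: PiE_iff)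
  qed
  show "finite (PiE {..<r} (\<lambda>_. {z::complex. z ^ (p^m) = 1}))"
    using assms by (intro finite_PiE) (auto intro: finite_roots_unity)
qed

lemma PG_div:
  assumes "p > 0" "y \<in> carrier (PG p r)"
  shows "\<exists>w\<in>carrier (PG p r). w [^]\<^bsub>PG p r\<^esub> (p^k) = y"
proof -
  have "\<forall>i<r. \<exists>w. y i = w ^ (p^k)" using assms(1) by (metis exists_complex_root power_not_zero gr_implies_not0)
  then obtain wf where wf: "\<And>i. i < r \<Longrightarrow> y i = wf i ^ (p^k)" by metis
  define w where "w = (\<lambda>i\<in>{..<r}. wf i)"
  have "w i ^ (p^(n+k)) = 1" if "i < r" "y i ^ (p^n) = 1" for i n
    using that wf[OF that(1)] by (simp add: w_def power_add power_mult[symmetric] mult.commute)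
  then have wc: "w \<in> carrier (PG p r)" using assms(2)
    by (auto simp: PiE_iff w_def) (metis lessThan_iff)
  have "w [^]\<^bsub>PG p r\<^esub> (p^k) = y" using assms(2) wc
    by (auto simp: PG_pow w_def wf PiE_iff extensional_def intro!: ext)
  with wc show ?thesis by blast
qed

lemma pow_sub: "x [^]\<^bsub>G\<lparr>carrier := A\<rparr>\<^esub> (n::nat) = x [^]\<^bsub>G\<^esub> n"
  by (simp add: nat_pow_def)

lemma coHopf:
  fixes G :: "('a,'b) monoid_scheme"
  assumes grp: "group G" and p: "p > 0" and dpt: "discrete_p_toral p G"
    and hom: "\<phi> \<in> hom G G" and inj: "inj_on \<phi> (carrier G)"
  shows "\<phi> ` carrier G = carrier G"
proof -
  interpret G: group G by fact
  obtain N r k where N: "N \<lhd> G" and iso: "G\<lparr>carrier := N\<rparr> \<cong> PG p r"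
     and fin: "finite (rcosets\<^bsub>G\<^esub> N)" and card: "card (rcosets\<^bsub>G\<^esub> N) = p^k"
    using dpt unfolding discrete_p_toral_def by blast
  from iso obtain \<psi> where \<psi>: "\<psi> \<in> iso (G\<lparr>carrier := N\<rparr>) (PG p r)" unfolding is_iso_def by blast
  interpret N: normal N G by fact
  have sub: "subgroup N G" by (rule N.subgroup_axioms)
  have NG: "N \<subseteq> carrier G" by (rule N.subset)
  have gN: "group (G\<lparr>carrier := N\<rparr>)" using G.subgroup_imp_group[OF sub] .
  have hom\<psi>: "\<psi> \<in> hom (G\<lparr>carrier:=N\<rparr>) (PG p r)" and bij: "bij_betw \<psi> N (carrier (PG p r))"
    using \<psi> by (auto simp: iso_def)
  interpret \<psi>h: group_hom "G\<lparr>carrier:=N\<rparr>" "PG p r" \<psi>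
    using gN PG_group[OF p] hom\<psi> by (simp add: group_hom_def group_hom_axioms_def)
  have \<psi>one: "\<psi> \<one>\<^bsub>G\<^esub> = \<one>\<^bsub>PG p r\<^esub>" using \<psi>h.hom_one by simp
  have \<psi>pow: "\<psi> (x [^]\<^bsub>G\<^esub> n) = \<psi> x [^]\<^bsub>PG p r\<^esub> n" if "x \<in> N" for x and n :: nat
    using \<psi>h.hom_nat_pow[of x n] that by (simp add: pow_sub)
  have Npow: "x [^]\<^bsub>G\<^esub> (n::nat) \<in> N" if "x \<in> N" for x n
    using monoid.nat_pow_closed[OF group.is_monoid[OF gN], of x n] that by (simp add: pow_sub)
  have injN: "inj_on \<psi> N" using bij by (simp add: bij_betw_def)
  have \<psi>c: "\<psi> x \<in> carrier (PG p r)" if "x \<in> N" for x using bij that by (meson bij_betw_apply)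
  have one_N: "\<one>\<^bsub>G\<^esub> \<in> N" by (rule N.one_closed)
  have N3: "\<exists>m. x [^]\<^bsub>G\<^esub> (p^m) = \<one>\<^bsub>G\<^esub>" if xN: "x \<in> N" for x
  proof -
    obtain m where "\<psi> x [^]\<^bsub>PG p r\<^esub> (p^m) = \<one>\<^bsub>PG p r\<^esub>" using PG_tors[OF \<psi>c[OF xN]] by blast
    then have "\<psi> (x [^]\<^bsub>G\<^esub> (p^m)) = \<psi> \<one>\<^bsub>G\<^esub>" using \<psi>pow[OF xN] \<psi>one by simp
    then show ?thesis using injN Npow[OF xN] one_N by (meson inj_onD)
  qed
  have N4: "finite {x\<in>N. x [^]\<^bsub>G\<^esub> (p^m) = \<one>\<^bsub>G\<^esub>}" for m
  proof (rule inj_on_finite[OF _ _ PG_tors_finite[OF p, of r m]])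
    show "inj_on \<psi> {x\<in>N. x [^]\<^bsub>G\<^esub> (p^m) = \<one>\<^bsub>G\<^esub>}" using injN by (rule inj_on_subset) auto
    show "\<psi> ` {x\<in>N. x [^]\<^bsub>G\<^esub> (p^m) = \<one>\<^bsub>G\<^esub>}
      \<subseteq> {y \<in> carrier (PG p r). y [^]\<^bsub>PG p r\<^esub> (p^m) = \<one>\<^bsub>PG p r\<^esub>}"
      using \<psi>c \<psi>pow \<psi>one by (auto simp del: carrier_product_group) (metis \<psi>pow)
  qed
  have N5: "\<exists>w\<in>N. w [^]\<^bsub>G\<^esub> (p^k) = x" if xN: "x \<in> N" for x
  proof -
    obtain w' where w': "w' \<in> carrier (PG p r)" "w' [^]\<^bsub>PG p r\<^esub> (p^k) = \<psi> x"
      using PG_div[OF p \<psi>c[OF xN]] by blast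
    then obtain w where w: "w \<in> N" "\<psi> w = w'" using bij by (metis bij_betw_imp_surj_on imageE)
    then have "\<psi> (w [^]\<^bsub>G\<^esub> (p^k)) = \<psi> x" using \<psi>pow w' by simp
    then have "w [^]\<^bsub>G\<^esub> (p^k) = x" using injN Npow[OF w(1)] xN by (meson inj_onD)
    then show ?thesis using w by blast
  qed
  have A: "x [^]\<^bsub>G\<^esub> (p^k) \<in> N" if x: "x \<in> carrier G" for x
  proof -
    interpret F: group "G Mod N" by (rule N.factorgroup_is_group)
    have cF: "carrier (G Mod N) = rcosets\<^bsub>G\<^esub> N"
      by (auto simp: carrier_FactGroup RCOSETS_def)
    have xc: "N #>\<^bsub>G\<^esub> x \<in> carrier (G Mod N)" using x cF G.rcosetsI[OF NG x] by simp
    have "Coset.order (G Mod N) = p^k" using card cF by (simp add: Coset.order_def)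
    then have "(N #>\<^bsub>G\<^esub> x) [^]\<^bsub>G Mod N\<^esub> (p^k) = N" using F.pow_order_eq_1[OF xc] by simp
    then have "N #>\<^bsub>G\<^esub> (x [^]\<^bsub>G\<^esub> (p^k)) = N" using N.FactGroup_pow[OF x] by simp
    then show ?thesis using G.coset_join1[OF _ _ sub] x by blast
  qed
  have \<phi>c: "\<phi> x \<in> carrier G" if "x \<in> carrier G" for x using hom that by (auto simp: hom_def)
  have \<phi>m: "\<phi> (x \<otimes>\<^bsub>G\<^esub> y) = \<phi> x \<otimes>\<^bsub>G\<^esub> \<phi> y" if "x \<in> carrier G" "y \<in> carrier G" for x y
    using hom that by (auto simp: hom_def)
  have \<phi>pow: "\<phi> (x [^]\<^bsub>G\<^esub> n) = \<phi> x [^]\<^bsub>G\<^esub> n" if "x \<in> carrier G" for x and n :: nat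
    using hom_nat_pow[OF hom that grp grp] .
  have B: "\<phi> ` N \<subseteq> N"
  proof
    fix y assume "y \<in> \<phi> ` N"
    then obtain x where x: "x \<in> N" "y = \<phi> x" by blast
    then obtain w where w: "w \<in> N" "w [^]\<^bsub>G\<^esub> (p^k) = x" using N5 by blast
    have "y = \<phi> w [^]\<^bsub>G\<^esub> (p^k)" using x w \<phi>pow NG by auto
    then show "y \<in> N" using A \<phi>c w NG by auto
  qed
  have C: "\<phi> ` N = N"
  proof
    show "\<phi> ` N \<subseteq> N" by (rule B)
    show "N \<subseteq> \<phi> ` N"
    proof
      fix x assume x: "x \<in> N"
      then obtain m where m: "x [^]\<^bsub>G\<^esub> (p^m) = \<one>\<^bsub>G\<^esub>" using N3 by blast
      define T where "T = {x\<in>N. x [^]\<^bsub>G\<^esub> (p^m) = \<one>\<^bsub>G\<^esub>}"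
      have "\<phi> ` T \<subseteq> T"
      proof
        fix y assume "y \<in> \<phi> ` T"
        then obtain z where z: "z \<in> T" "y = \<phi> z" by blast
        then have "y [^]\<^bsub>G\<^esub> (p^m) = \<phi> \<one>\<^bsub>G\<^esub>" using \<phi>pow[of z "p^m"] NG by (auto simp: T_def)
        also have "\<phi> \<one>\<^bsub>G\<^esub> = \<one>\<^bsub>G\<^esub>" using hom grp by (simp add: group_hom.hom_one group_hom_axioms_def group_hom_def)
        finally show "y \<in> T" using B z by (auto simp: T_def)
      qed
      moreover have "T \<subseteq> carrier G" using NG by (auto simp: T_def)
      then have "inj_on \<phi> T" using inj_on_subset[OF inj] by blast
      ultimately have "\<phi> ` T = T" using endo_inj_surj[OF N4[of m, folded T_def]] by blast
      moreover have "x \<in> T" using x m by (simp add: T_def)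
      ultimately show "x \<in> \<phi> ` N" by (auto simp: T_def)
    qed
  qed
  have E: "\<phi> ` (N #>\<^bsub>G\<^esub> x) = N #>\<^bsub>G\<^esub> \<phi> x" if x: "x \<in> carrier G" for x
  proof -
    have "\<phi> ` (N #>\<^bsub>G\<^esub> x) = (\<phi> ` N) #>\<^bsub>G\<^esub> \<phi> x"
      using x NG \<phi>m unfolding r_coset_def by force
    then show ?thesis using C by simp
  qed
  have RC: "R \<subseteq> carrier G" if "R \<in> rcosets\<^bsub>G\<^esub> N" for R
    using that G.rcosets_part_G[OF sub] by blast
  have F: "(\<lambda>R. \<phi> ` R) ` (rcosets\<^bsub>G\<^esub> N) = rcosets\<^bsub>G\<^esub> N"
  proof (rule endo_inj_surj[OF fin])
    show "(\<lambda>R. \<phi> ` R) ` (rcosets\<^bsub>G\<^esub> N) \<subseteq> rcosets\<^bsub>G\<^esub> N"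
    proof
      fix R' assume "R' \<in> (\<lambda>R. \<phi> ` R) ` (rcosets\<^bsub>G\<^esub> N)"
      then obtain R where R: "R \<in> rcosets\<^bsub>G\<^esub> N" "R' = \<phi> ` R" by blast
      then obtain x where x: "x \<in> carrier G" "R = N #>\<^bsub>G\<^esub> x" unfolding RCOSETS_def by blast
      have "R' = N #>\<^bsub>G\<^esub> \<phi> x" using R(2) x E by simp
      then show "R' \<in> rcosets\<^bsub>G\<^esub> N" using G.rcosetsI[OF NG \<phi>c[OF x(1)]] by simp
    qed
    show "inj_on (\<lambda>R. \<phi> ` R) (rcosets\<^bsub>G\<^esub> N)"
    proof (rule inj_onI)
      fix R R' assume "R \<in> rcosets\<^bsub>G\<^esub> N" "R' \<in> rcosets\<^bsub>G\<^esub> N" "\<phi> ` R = \<phi> ` R'"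
      then show "R = R'" using inj_on_image_eq_iff[OF inj RC RC] by blast
    qed
  qed
  show ?thesis
  proof
    show "\<phi> ` carrier G \<subseteq> carrier G" using \<phi>c by auto
    show "carrier G \<subseteq> \<phi> ` carrier G"
    proof
      fix x assume x: "x \<in> carrier G"
      have "N #>\<^bsub>G\<^esub> x \<in> rcosets\<^bsub>G\<^esub> N" using G.rcosetsI[OF NG x] .
      then have "N #>\<^bsub>G\<^esub> x \<in> (\<lambda>R. \<phi> ` R) ` (rcosets\<^bsub>G\<^esub> N)" using F by simp
      then obtain R where R: "R \<in> rcosets\<^bsub>G\<^esub> N" "N #>\<^bsub>G\<^esub> x = \<phi> ` R" by blast
      have "x \<in> N #>\<^bsub>G\<^esub> x" using G.rcos_self[OF x sub] .
      then show "x \<in> \<phi> ` carrier G" using R RC by blast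
    qed
  qed
qed

lemma r_coset_upd: "r_coset (H\<lparr>carrier := A\<rparr>) = r_coset H"
  by (simp add: r_coset_def fun_eq_iff)

lemma dpt_transport:
  fixes H :: "('a,'b) monoid_scheme"
  assumes grp: "group H" and S: "subgroup S H" and dpt: "discrete_p_toral p (H\<lparr>carrier:=S\<rparr>)"
    and hom: "f \<in> hom H H" and inj: "inj_on f (carrier H)"
  shows "discrete_p_toral p (H\<lparr>carrier := f ` S\<rparr>)"
proof -
  interpret H: group H by fact
  interpret fh: group_hom H H f using grp hom by (simp add: group_hom_def group_hom_axioms_def)
  have SH: "S \<subseteq> carrier H" using S by (rule subgroup.subset)
  have fS: "subgroup (f ` S) H" by (rule fh.subgroup_img_is_subgroup[OF S])
  have gG': "group (H\<lparr>carrier := f ` S\<rparr>)" by (rule H.subgroup_imp_group[OF fS])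
  have gG: "group (H\<lparr>carrier := S\<rparr>)" by (rule H.subgroup_imp_group[OF S])
  obtain N r k where N: "N \<lhd> H\<lparr>carrier:=S\<rparr>" and iso: "H\<lparr>carrier:=S\<rparr>\<lparr>carrier := N\<rparr> \<cong> PG p r"
     and fin: "finite (rcosets\<^bsub>H\<lparr>carrier:=S\<rparr>\<^esub> N)" and card: "card (rcosets\<^bsub>H\<lparr>carrier:=S\<rparr>\<^esub> N) = p^k"
    using dpt unfolding discrete_p_toral_def by blast
  have NS': "subgroup N (H\<lparr>carrier:=S\<rparr>)" using N by (simp add: normal_def)
  have NS: "N \<subseteq> S" using subgroup.subset[OF NS'] by simp
  have NH: "subgroup N H"
    using H.incl_subgroup[OF S NS'] .
  have NHc: "N \<subseteq> carrier H" using NS SH by blast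
  have fN: "subgroup (f ` N) H" by (rule fh.subgroup_img_is_subgroup[OF NH])
  have conjN: "s \<otimes>\<^bsub>H\<^esub> n \<otimes>\<^bsub>H\<^esub> inv\<^bsub>H\<^esub> s \<in> N" if "s \<in> S" "n \<in> N" for s n
  proof -
    have "\<forall>x\<in>carrier (H\<lparr>carrier:=S\<rparr>). \<forall>h\<in>N. x \<otimes>\<^bsub>H\<lparr>carrier:=S\<rparr>\<^esub> h \<otimes>\<^bsub>H\<lparr>carrier:=S\<rparr>\<^esub> inv\<^bsub>H\<lparr>carrier:=S\<rparr>\<^esub> x \<in> N"
      using group.normal_inv_iff[OF gG] N by blast
    then show ?thesis using that H.m_inv_consistent[OF S] by auto
  qed
  have normal': "f ` N \<lhd> H\<lparr>carrier := f ` S\<rparr>"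
  proof -
    have sub': "subgroup (f ` N) (H\<lparr>carrier := f ` S\<rparr>)"
      using H.subgroup_incl[OF fN fS] NS by blast
    have "x \<otimes>\<^bsub>H\<^esub> h \<otimes>\<^bsub>H\<^esub> inv\<^bsub>H\<^esub> x \<in> f ` N" if xh: "x \<in> f ` S" "h \<in> f ` N" for x h
    proof -
      obtain s n where sn: "s \<in> S" "n \<in> N" "x = f s" "h = f n" using xh by blast
      have "x \<otimes>\<^bsub>H\<^esub> h \<otimes>\<^bsub>H\<^esub> inv\<^bsub>H\<^esub> x = f (s \<otimes>\<^bsub>H\<^esub> n \<otimes>\<^bsub>H\<^esub> inv\<^bsub>H\<^esub> s)"
      proof -
        have c: "s \<in> carrier H" "n \<in> carrier H" using sn SH NHc by auto
        then show ?thesis using sn by (simp add: fh.hom_mult)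
      qed
      then show ?thesis using conjN[OF sn(1,2)] by blast
    qed
    then show ?thesis using group.normal_inv_iff[OF gG'] sub' H.m_inv_consistent[OF fS] by auto
  qed
  have iso1: "H\<lparr>carrier:=S\<rparr>\<lparr>carrier := N\<rparr> \<cong> H\<lparr>carrier := f ` S\<rparr>\<lparr>carrier := f ` N\<rparr>"
  proof -
    have "f \<in> iso (H\<lparr>carrier := N\<rparr>) (H\<lparr>carrier := f ` N\<rparr>)"
      unfolding iso_def hom_def using NHc inj_on_subset[OF inj NHc]
      by (auto simp: bij_betw_def intro!: fh.hom_mult)
    then show ?thesis by (auto simp: is_iso_def)
  qed
  have gN: "group (H\<lparr>carrier:=S\<rparr>\<lparr>carrier := N\<rparr>)" using H.subgroup_imp_group[OF NH] by simp
  have iso2: "H\<lparr>carrier := f ` S\<rparr>\<lparr>carrier := f ` N\<rparr> \<cong> PG p r"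
    using iso_trans[OF group.iso_sym[OF gN iso1] iso] .
  have RC: "rcosets\<^bsub>H\<lparr>carrier:=S\<rparr>\<^esub> N = (\<lambda>s. N #>\<^bsub>H\<^esub> s) ` S"
    by (auto simp: RCOSETS_def r_coset_upd)
  have RC': "rcosets\<^bsub>H\<lparr>carrier:=f ` S\<rparr>\<^esub> (f ` N) = (\<lambda>s. (f ` N) #>\<^bsub>H\<^esub> f s) ` S"
    by (auto simp: RCOSETS_def r_coset_upd)
  have img: "f ` (N #>\<^bsub>H\<^esub> s) = (f ` N) #>\<^bsub>H\<^esub> f s" if "s \<in> S" for s
    using that SH NHc unfolding r_coset_def by force
  have sub_c: "N #>\<^bsub>H\<^esub> s \<subseteq> carrier H" if "s \<in> S" for s
    using that SH NHc H.r_coset_subset_G by blast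
  have bij: "bij_betw (\<lambda>R. f ` R) (rcosets\<^bsub>H\<lparr>carrier:=S\<rparr>\<^esub> N) (rcosets\<^bsub>H\<lparr>carrier:=f ` S\<rparr>\<^esub> (f ` N))"
  proof (rule bij_betw_imageI)
    show "inj_on (\<lambda>R. f ` R) (rcosets\<^bsub>H\<lparr>carrier:=S\<rparr>\<^esub> N)"
    proof (rule inj_onI)
      fix R R' assume "R \<in> rcosets\<^bsub>H\<lparr>carrier:=S\<rparr>\<^esub> N" "R' \<in> rcosets\<^bsub>H\<lparr>carrier:=S\<rparr>\<^esub> N" "f ` R = f ` R'"
      then show "R = R'" using inj_on_image_eq_iff[OF inj] sub_c unfolding RC by auto
    qed
    show "(\<lambda>R. f ` R) ` (rcosets\<^bsub>H\<lparr>carrier:=S\<rparr>\<^esub> N) = rcosets\<^bsub>H\<lparr>carrier:=f ` S\<rparr>\<^esub> (f ` N)"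
      unfolding RC RC' using img by (auto simp: image_image)
  qed
  have "finite (rcosets\<^bsub>H\<lparr>carrier:=f ` S\<rparr>\<^esub> (f ` N))" using bij_betw_finite[OF bij] fin by simp
  moreover have "card (rcosets\<^bsub>H\<lparr>carrier:=f ` S\<rparr>\<^esub> (f ` N)) = p^k" using bij_betw_same_card[OF bij] card by simp
  ultimately show ?thesis unfolding discrete_p_toral_def using gG' normal' iso2 by blast
qed

context group
begin

lemma conjaut_app: "h \<in> carrier G \<Longrightarrow> x \<in> carrier G \<Longrightarrow> conjaut G h x = h \<otimes> x \<otimes> inv h"
  by (simp add: conjaut_def)

lemma inv_cancel_l: "x \<in> carrier G \<Longrightarrow> y \<in> carrier G \<Longrightarrow> inv x \<otimes> (x \<otimes> y) = y"
  by (simp add: m_assoc[symmetric])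

lemma inv_cancel_l2: "x \<in> carrier G \<Longrightarrow> y \<in> carrier G \<Longrightarrow> x \<otimes> (inv x \<otimes> y) = y"
  by (simp add: m_assoc[symmetric])

lemma conj_cancel: "h \<in> carrier G \<Longrightarrow> x \<in> carrier G \<Longrightarrow> inv h \<otimes> (h \<otimes> x \<otimes> inv h) \<otimes> h = x"
  by (simp add: m_assoc inv_cancel_l)

lemma conj_cancel2: "h \<in> carrier G \<Longrightarrow> x \<in> carrier G \<Longrightarrow> h \<otimes> (inv h \<otimes> x \<otimes> h) \<otimes> inv h = x"
  by (simp add: m_assoc inv_cancel_l2)

lemma conjaut_Bij: "h \<in> carrier G \<Longrightarrow> conjaut G h \<in> Bij (carrier G)"
  unfolding Bij_def
proof (intro IntI CollectI)
  assume h: "h \<in> carrier G"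
  show "conjaut G h \<in> extensional (carrier G)" by (simp add: conjaut_def)
  show "bij_betw (conjaut G h) (carrier G) (carrier G)"
  proof (rule bij_betwI[where g = "conjaut G (inv h)"])
    show "conjaut G h \<in> carrier G \<rightarrow> carrier G" using h by (auto simp: conjaut_def)
    show "conjaut G (inv h) \<in> carrier G \<rightarrow> carrier G" using h by (auto simp: conjaut_def)
    show "conjaut G (inv h) (conjaut G h x) = x" if "x \<in> carrier G" for x
      using that h by (simp add: conjaut_app conj_cancel)
    show "conjaut G h (conjaut G (inv h) y) = y" if "y \<in> carrier G" for y
      using that h conj_cancel2[of h y] by (simp add: conjaut_app)
  qed
qed

lemma conjaut_hom: "h \<in> carrier G \<Longrightarrow> conjaut G h \<in> hom G G"
  unfolding hom_def by (auto simp: conjaut_app m_assoc inv_cancel_l)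

lemma conjaut_auto: "h \<in> carrier G \<Longrightarrow> conjaut G h \<in> auto G"
  by (simp add: auto_def conjaut_hom conjaut_Bij)

lemma Auto_carrier [simp]: "carrier (AutoGroup G) = auto G"
  by (simp add: AutoGroup_def)

lemma Auto_mult: "f \<in> auto G \<Longrightarrow> g \<in> auto G \<Longrightarrow> f \<otimes>\<^bsub>AutoGroup G\<^esub> g = compose (carrier G) f g"
  by (simp add: AutoGroup_def BijGroup_def auto_def)

lemma Auto_one: "\<one>\<^bsub>AutoGroup G\<^esub> = (\<lambda>x\<in>carrier G. x)"
  by (simp add: AutoGroup_def BijGroup_def)

lemma conjaut_mult: "g \<in> carrier G \<Longrightarrow> h \<in> carrier G \<Longrightarrow>
    conjaut G (g \<otimes> h) = compose (carrier G) (conjaut G g) (conjaut G h)"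
  by (auto simp: conjaut_def compose_def fun_eq_iff m_assoc inv_mult_group inv_cancel_l)

lemma conjaut_one: "conjaut G \<one> = (\<lambda>x\<in>carrier G. x)"
  by (auto simp: conjaut_def fun_eq_iff)

lemma conjaut_id_iff: "h \<in> carrier G \<Longrightarrow> conjaut G h = (\<lambda>x\<in>carrier G. x) \<longleftrightarrow> h \<in> center G"
proof
  assume h: "h \<in> carrier G" and c: "conjaut G h = (\<lambda>x\<in>carrier G. x)"
  have "h \<otimes> x = x \<otimes> h" if x: "x \<in> carrier G" for x
  proof -
    have "h \<otimes> x \<otimes> inv h = x" using fun_cong[OF c, of x] x h by (simp add: conjaut_app)
    then have "h \<otimes> x \<otimes> inv h \<otimes> h = x \<otimes> h" by simp
    then show ?thesis using h x by (simp add: m_assoc)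
  qed
  then show "h \<in> center G" using h by (simp add: center_def)
next
  assume "h \<in> center G"
  then have h: "h \<in> carrier G" and c: "\<And>x. x \<in> carrier G \<Longrightarrow> h \<otimes> x = x \<otimes> h" by (auto simp: center_def)
  show "conjaut G h = (\<lambda>x\<in>carrier G. x)"
    using h c by (auto simp: conjaut_def fun_eq_iff m_assoc)
qed

lemma conj_coset: "S \<subseteq> carrier G \<Longrightarrow> h \<in> carrier G \<Longrightarrow> h <# S #> inv h = conjaut G h ` S"
  by (auto simp: l_coset_def r_coset_def conjaut_def)

lemma conj_set_eq: "S \<subseteq> carrier G \<Longrightarrow> h \<in> carrier G \<Longrightarrow> conj_set G h S = conjaut G h ` S"
  by (auto simp: conj_set_def conjaut_def)

lemma normalizer_iff: "S \<subseteq> carrier G \<Longrightarrow>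
    h \<in> normalizer G S \<longleftrightarrow> h \<in> carrier G \<and> conjaut G h ` S = S"
  by (auto simp: normalizer_def stabilizer_def conj_coset)

lemma center_sub: "subgroup (center G) G"
proof (rule subgroupI)
  show "center G \<subseteq> carrier G" by (auto simp: center_def)
  show "center G \<noteq> {}" by (auto simp: center_def intro!: exI[of _ \<one>])
  show "inv a \<in> center G" if "a \<in> center G" for a
  proof -
    have a: "a \<in> carrier G" "\<And>x. x \<in> carrier G \<Longrightarrow> a \<otimes> x = x \<otimes> a" using that by (auto simp: center_def)
    have "inv a \<otimes> x = x \<otimes> inv a" if x: "x \<in> carrier G" for x
    proof -
      have "inv a \<otimes> x = inv a \<otimes> (x \<otimes> a) \<otimes> inv a" using a(1) x by (simp add: m_assoc)
      also have "\<dots> = inv a \<otimes> (a \<otimes> x) \<otimes> inv a" using a x by metis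
      also have "\<dots> = x \<otimes> inv a" using a(1) x by (simp add: inv_cancel_l)
      finally show ?thesis .
    qed
    then show ?thesis using a by (simp add: center_def)
  qed
  show "a \<otimes> b \<in> center G" if "a \<in> center G" "b \<in> center G" for a b
  proof -
    have a: "a \<in> carrier G" "\<And>x. x \<in> carrier G \<Longrightarrow> a \<otimes> x = x \<otimes> a"
      and b: "b \<in> carrier G" "\<And>x. x \<in> carrier G \<Longrightarrow> b \<otimes> x = x \<otimes> b" using that by (auto simp: center_def)
    have "a \<otimes> b \<otimes> x = x \<otimes> (a \<otimes> b)" if x: "x \<in> carrier G" for x
    proof -
      have "a \<otimes> b \<otimes> x = a \<otimes> (b \<otimes> x)" using a(1) b(1) x by (simp add: m_assoc)
      also have "\<dots> = a \<otimes> (x \<otimes> b)" using b x by metis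
      also have "\<dots> = (a \<otimes> x) \<otimes> b" using a(1) b(1) x by (simp add: m_assoc)
      also have "\<dots> = (x \<otimes> a) \<otimes> b" using a x by metis
      also have "\<dots> = x \<otimes> (a \<otimes> b)" using a(1) b(1) x by (simp add: m_assoc)
      finally show ?thesis .
    qed
    then show ?thesis using a(1) b(1) by (simp add: center_def)
  qed
qed

lemma Inn_sub: "Inn G \<subseteq> auto G"
  by (auto simp: Inn_def conjaut_auto)

lemma c_mult: "g \<in> carrier G \<Longrightarrow> h \<in> carrier G \<Longrightarrow>
   conjaut G g \<otimes>\<^bsub>AutoGroup G\<^esub> conjaut G h = conjaut G (g \<otimes> h)"
  by (simp add: Auto_mult conjaut_auto conjaut_mult)

lemma Inn_normal: "Inn G \<lhd> AutoGroup G"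
proof -
  interpret A: group "AutoGroup G" by (rule AutoGroup)
  have c_inv: "inv\<^bsub>AutoGroup G\<^esub> (conjaut G h) = conjaut G (inv h)" if h: "h \<in> carrier G" for h
  proof (rule A.inv_equality)
    show "conjaut G (inv h) \<otimes>\<^bsub>AutoGroup G\<^esub> conjaut G h = \<one>\<^bsub>AutoGroup G\<^esub>"
      using h by (simp add: c_mult conjaut_one Auto_one)
    show "conjaut G h \<in> carrier (AutoGroup G)" using h by (simp add: conjaut_auto)
    show "conjaut G (inv h) \<in> carrier (AutoGroup G)" using h by (simp add: conjaut_auto)
  qed
  have sub: "subgroup (Inn G) (AutoGroup G)"
  proof (rule A.subgroupI)
    show "Inn G \<subseteq> carrier (AutoGroup G)" using Inn_sub by simp
    show "Inn G \<noteq> {}" by (auto simp: Inn_def)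
    show "inv\<^bsub>AutoGroup G\<^esub> a \<in> Inn G" if "a \<in> Inn G" for a
      using that c_inv by (auto simp: Inn_def)
    show "a \<otimes>\<^bsub>AutoGroup G\<^esub> b \<in> Inn G" if "a \<in> Inn G" "b \<in> Inn G" for a b
      using that c_mult by (auto simp: Inn_def)
  qed
  have key: "f \<otimes>\<^bsub>AutoGroup G\<^esub> conjaut G h \<otimes>\<^bsub>AutoGroup G\<^esub> inv\<^bsub>AutoGroup G\<^esub> f = conjaut G (f h)"
    if f: "f \<in> auto G" and h: "h \<in> carrier G" for f h
  proof -
    interpret fh: group_hom G G f using f is_group
      by (simp add: group_hom_def group_hom_axioms_def auto_def)
    have fhc: "f h \<in> carrier G" using h by simp
    have "f \<otimes>\<^bsub>AutoGroup G\<^esub> conjaut G h = conjaut G (f h) \<otimes>\<^bsub>AutoGroup G\<^esub> f"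
      using f h fhc by (auto simp: Auto_mult conjaut_auto compose_def fun_eq_iff conjaut_app)
    then have "f \<otimes>\<^bsub>AutoGroup G\<^esub> conjaut G h \<otimes>\<^bsub>AutoGroup G\<^esub> inv\<^bsub>AutoGroup G\<^esub> f
       = conjaut G (f h) \<otimes>\<^bsub>AutoGroup G\<^esub> f \<otimes>\<^bsub>AutoGroup G\<^esub> inv\<^bsub>AutoGroup G\<^esub> f" by simp
    also have "\<dots> = conjaut G (f h)"
    proof -
      have fc: "f \<in> carrier (AutoGroup G)" using f by simp
      have cc: "conjaut G (f h) \<in> carrier (AutoGroup G)" using conjaut_auto[OF fhc] by simp
      show ?thesis using A.m_assoc[OF cc fc A.inv_closed[OF fc]] A.r_inv[OF fc] A.r_one[OF cc] by simp
    qed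
    finally show ?thesis .
  qed
  have "x h \<in> carrier G" if "x \<in> auto G" "h \<in> carrier G" for x h
    using that by (auto simp: auto_def hom_def)
  then show ?thesis
    unfolding A.normal_inv_iff using sub key by (auto simp: Inn_def)
qed

end

theorem lemma3p1:
  fixes H :: "('a, 'b) monoid_scheme" and S :: "'a set" and p :: nat
  assumes "group H" and "Factorial_Ring.prime p" and "sylow_p p H S"
  shows "\<comment> \<open>Z(H) -> N_H(S) is the (injective) inclusion of a subgroup\<close>
         subgroup (center H) (H\<lparr>carrier := normalizer H S\<rparr>)
       \<and> \<comment> \<open>N_H(S) -> Aut(H,S), h |-> c_h, is a homomorphism\<close>
         conjaut H \<in> hom (H\<lparr>carrier := normalizer H S\<rparr>) ((AutoGroup H)\<lparr>carrier := AutHS H S\<rparr>)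
       \<and> \<comment> \<open>Aut(H,S) -> Out(H) is a homomorphism\<close>
         out_proj H \<in> hom ((AutoGroup H)\<lparr>carrier := AutHS H S\<rparr>) (Out H)
       \<and> \<comment> \<open>exactness at N_H(S)\<close>
         kernel (H\<lparr>carrier := normalizer H S\<rparr>) ((AutoGroup H)\<lparr>carrier := AutHS H S\<rparr>) (conjaut H)
           = center H
       \<and> \<comment> \<open>exactness at Aut(H,S)\<close>
         kernel ((AutoGroup H)\<lparr>carrier := AutHS H S\<rparr>) (Out H) (out_proj H)
           = conjaut H ` normalizer H S
       \<and> \<comment> \<open>exactness at Out(H): surjectivity\<close>
         out_proj H ` AutHS H S = carrier (Out H)"
proof -
  interpret H: group H by fact
  interpret A: group "AutoGroup H" by (rule H.AutoGroup)
  interpret I: normal "Inn H" "AutoGroup H" by (rule H.Inn_normal)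
  have p0: "p > 0" using assms(2) prime_gt_0_nat by blast
  have S: "subgroup S H" and dptS: "discrete_p_toral p (H\<lparr>carrier := S\<rparr>)"
    and syl: "\<And>P. subgroup P H \<Longrightarrow> discrete_p_toral p (H\<lparr>carrier := P\<rparr>) \<Longrightarrow>
        \<exists>h \<in> carrier H. conj_set H h P \<subseteq> S"
    using assms(3) unfolding sylow_p_def by blast+
  have SH: "S \<subseteq> carrier H" using S by (rule subgroup.subset)
  have Nsub: "subgroup (normalizer H S) H" by (rule H.normalizer_imp_subgroup[OF SH])
  have NH: "normalizer H S \<subseteq> carrier H" using Nsub by (rule subgroup.subset)
  have Nc: "conjaut H h \<in> AutHS H S" if "h \<in> normalizer H S" for h
    using that H.normalizer_iff[OF SH] H.conjaut_auto by (auto simp: AutHS_def)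
  have ZN: "center H \<subseteq> normalizer H S"
  proof
    fix h assume h: "h \<in> center H"
    then have hc: "h \<in> carrier H" by (simp add: center_def)
    then have "conjaut H h = (\<lambda>x\<in>carrier H. x)" using H.conjaut_id_iff h by blast
    then have "conjaut H h ` S = S" using SH by auto
    then show "h \<in> normalizer H S" using H.normalizer_iff[OF SH] hc by blast
  qed
  have InnSub: "subgroup (Inn H) (AutoGroup H)" by (rule I.subgroup_axioms)
  have InnA: "Inn H \<subseteq> carrier (AutoGroup H)" using InnSub by (rule subgroup.subset)
  have AHS: "AutHS H S \<subseteq> auto H" by (auto simp: AutHS_def)
  have coset_eq: "Inn H #>\<^bsub>AutoGroup H\<^esub> f = Inn H \<longleftrightarrow> f \<in> Inn H" if f: "f \<in> auto H" for f
    using A.coset_join1[of "Inn H" f] A.coset_join2[of f "Inn H"] f InnSub by auto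
  have OutC: "carrier (Out H) = (\<lambda>f. Inn H #>\<^bsub>AutoGroup H\<^esub> f) ` auto H"
    by (simp add: Out_def carrier_FactGroup)
  have OutM: "monoid.mult (Out H) = set_mult (AutoGroup H)"
    by (simp add: Out_def FactGroup_def)
  have OutO: "\<one>\<^bsub>Out H\<^esub> = Inn H" by (simp add: Out_def)
  have P1: "subgroup (center H) (H\<lparr>carrier := normalizer H S\<rparr>)"
    by (rule H.subgroup_incl[OF H.center_sub Nsub ZN])
  have P2: "conjaut H \<in> hom (H\<lparr>carrier := normalizer H S\<rparr>) ((AutoGroup H)\<lparr>carrier := AutHS H S\<rparr>)"
    unfolding hom_def using Nc NH H.c_mult by (auto simp: subset_iff)
  have P3: "out_proj H \<in> hom ((AutoGroup H)\<lparr>carrier := AutHS H S\<rparr>) (Out H)"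
    unfolding hom_def
  proof (intro CollectI conjI ballI)
    show "out_proj H \<in> carrier ((AutoGroup H)\<lparr>carrier := AutHS H S\<rparr>) \<rightarrow> carrier (Out H)"
      using AHS by (auto simp: OutC out_proj_def)
    fix f g assume "f \<in> carrier ((AutoGroup H)\<lparr>carrier := AutHS H S\<rparr>)"
      "g \<in> carrier ((AutoGroup H)\<lparr>carrier := AutHS H S\<rparr>)"
    then have fg: "f \<in> carrier (AutoGroup H)" "g \<in> carrier (AutoGroup H)" using AHS by auto
    show "out_proj H (f \<otimes>\<^bsub>(AutoGroup H)\<lparr>carrier := AutHS H S\<rparr>\<^esub> g)
        = out_proj H f \<otimes>\<^bsub>Out H\<^esub> out_proj H g"
      using I.rcos_sum[OF fg] by (simp add: OutM out_proj_def)
  qed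
  have P4: "kernel (H\<lparr>carrier := normalizer H S\<rparr>) ((AutoGroup H)\<lparr>carrier := AutHS H S\<rparr>) (conjaut H)
           = center H"
    unfolding kernel_def using ZN NH H.conjaut_id_iff by (auto simp: H.Auto_one)
  have P5: "kernel ((AutoGroup H)\<lparr>carrier := AutHS H S\<rparr>) (Out H) (out_proj H)
           = conjaut H ` normalizer H S"
  proof
    show "kernel ((AutoGroup H)\<lparr>carrier := AutHS H S\<rparr>) (Out H) (out_proj H) \<subseteq> conjaut H ` normalizer H S"
    proof
      fix f assume "f \<in> kernel ((AutoGroup H)\<lparr>carrier := AutHS H S\<rparr>) (Out H) (out_proj H)"
      then have f: "f \<in> AutHS H S" "Inn H #>\<^bsub>AutoGroup H\<^esub> f = Inn H"
        by (auto simp: kernel_def OutO out_proj_def)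
      then have "f \<in> Inn H" using coset_eq AHS by blast
      then obtain h where h: "h \<in> carrier H" "f = conjaut H h" by (auto simp: Inn_def)
      then have "conjaut H h ` S = S" using f(1) by (simp add: AutHS_def)
      then have "h \<in> normalizer H S" using H.normalizer_iff[OF SH] h by blast
      then show "f \<in> conjaut H ` normalizer H S" using h by blast
    qed
    show "conjaut H ` normalizer H S \<subseteq> kernel ((AutoGroup H)\<lparr>carrier := AutHS H S\<rparr>) (Out H) (out_proj H)"
    proof
      fix f assume "f \<in> conjaut H ` normalizer H S"
      then obtain h where h: "h \<in> normalizer H S" "f = conjaut H h" by blast
      have fI: "f \<in> Inn H" using h NH by (auto simp: Inn_def)
      have "f \<in> AutHS H S" using Nc h by simp
      then show "f \<in> kernel ((AutoGroup H)\<lparr>carrier := AutHS H S\<rparr>) (Out H) (out_proj H)"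
        using coset_eq[of f] AHS fI by (auto simp: kernel_def OutO out_proj_def)
    qed
  qed
  have P6: "out_proj H ` AutHS H S = carrier (Out H)"
  proof
    show "out_proj H ` AutHS H S \<subseteq> carrier (Out H)" using AHS by (auto simp: OutC out_proj_def)
    show "carrier (Out H) \<subseteq> out_proj H ` AutHS H S"
    proof
      fix Y assume "Y \<in> carrier (Out H)"
      then obtain f where f: "f \<in> auto H" "Y = Inn H #>\<^bsub>AutoGroup H\<^esub> f" using OutC by auto
      have fhom: "f \<in> hom H H" and finj: "inj_on f (carrier H)" and fbij: "bij_betw f (carrier H) (carrier H)"
        using f(1) by (auto simp: auto_def Bij_def bij_betw_def)
      interpret fh: group_hom H H f using fhom assms(1) by (simp add: group_hom_def group_hom_axioms_def)
      have fS: "subgroup (f ` S) H" by (rule fh.subgroup_img_is_subgroup[OF S])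
      have "discrete_p_toral p (H\<lparr>carrier := f ` S\<rparr>)"
        by (rule dpt_transport[OF assms(1) S dptS fhom finj])
      then obtain h where h: "h \<in> carrier H" "conj_set H h (f ` S) \<subseteq> S" using syl[OF fS] by blast
      have fSH: "f ` S \<subseteq> carrier H" using fS by (rule subgroup.subset)
      define g where "g = conjaut H h \<otimes>\<^bsub>AutoGroup H\<^esub> f"
      have ca: "conjaut H h \<in> auto H" using H.conjaut_auto[OF h(1)] .
      have g_eq: "g = compose (carrier H) (conjaut H h) f" using H.Auto_mult[OF ca f(1)] by (simp add: g_def)
      have gA: "g \<in> auto H" using A.m_closed[of "conjaut H h" f] ca f(1) by (simp add: g_def)
      have gS: "g ` S \<subseteq> S"
      proof -
        have "g ` S = conjaut H h ` (f ` S)" using SH by (auto simp: g_eq compose_def)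
        also have "\<dots> = conj_set H h (f ` S)" using H.conj_set_eq[OF fSH h(1)] by simp
        finally show ?thesis using h(2) by simp
      qed
      have ghom: "g \<in> hom H H" and ginj: "inj_on g (carrier H)"
        using gA by (auto simp: auto_def Bij_def bij_betw_def)
      have "g \<in> hom (H\<lparr>carrier := S\<rparr>) (H\<lparr>carrier := S\<rparr>)"
        using ghom gS SH unfolding hom_def by (auto simp: subset_iff)
      moreover have "inj_on g (carrier (H\<lparr>carrier := S\<rparr>))" using inj_on_subset[OF ginj SH] by simp
      ultimately have "g ` carrier (H\<lparr>carrier := S\<rparr>) = carrier (H\<lparr>carrier := S\<rparr>)"
        using coHopf[OF H.subgroup_imp_group[OF S] p0 dptS] by blast
      then have "g ` S = S" by simp
      then have gAHS: "g \<in> AutHS H S" using gA by (simp add: AutHS_def)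
      have cI: "conjaut H h \<in> Inn H" using h(1) by (simp add: Inn_def)
      have "out_proj H g = (Inn H #>\<^bsub>AutoGroup H\<^esub> conjaut H h) #>\<^bsub>AutoGroup H\<^esub> f"
        using A.coset_mult_assoc[OF InnA, of "conjaut H h" f] ca f(1) by (simp add: out_proj_def g_def)
      also have "\<dots> = Y" using A.coset_join2[of "conjaut H h" "Inn H"] ca InnSub cI f(2) by simp
      finally show "Y \<in> out_proj H ` AutHS H S" using gAHS by blast
    qed
  qed
  show ?thesis using P1 P2 P3 P4 P5 P6 by blast
qed

end
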